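(* Consider the two-stage robust problem $w^*=\min_{x\in\mathcal X}c_1x+\max_{u\in\mathcal U(x)}\min_{y\in\mathcal Y(x,u)}c_2y$ described in the context, with continuous uncertainty and recourse variables. Let $\mathcal P_\Pi$ and $\mathcal R_\Pi$ be the (finite) sets of extreme points and extreme rays of $\Pi=\{\pi\ge 0: B_2^\intercal\pi\le c_2^\intercal\}$. Then the problem is equivalent to the bilevel linear program $\min c_1x+\eta$ subject to $x\in\mathcal X$; $\eta\ge (d-B_1x)^\intercal\pi+\max_{u\in\mathcal U(x)}(-Eu)^\intercal\pi$ for all $\pi\in\mathcal P_\Pi$; $(d-B_1x)^\intercal\gamma+\max_{v\in\mathcal U(x)}(-Ev)^\intercal\gamma\le 0$ for all $\gamma\in\mathcal R_\Pi$; and in particular its optimal value is $w^*$.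
   Context: $\mathcal X=\{x\in\mathbb Z^{m_x}_+\times\mathbb R^{n_x}_+: Ax\ge b\}$, $\mathcal U(x)=\{u\in\mathbb R^{n_u}_+: F(x)u\le h+Gx\}$ with $F(x)$ a matrix depending on $x$, and $\mathcal Y(x,u)=\{y\in\mathbb R^{n_y}_+: B_2y\ge d-B_1x-Eu\}$. The optimal value of an infeasible minimization (maximization) problem is $+\infty$ ($-\infty$). Standing assumptions: (A1) $\mathcal U(x)\neq\emptyset$ for all $x\in\mathcal X$; (A2) $\mathcal U(x)$ is bounded for all $x\in\mathcal X$; (A3) $\min\{c_1x+c_2y: x\in\mathcal X,u\in\mathcal U(x),y\in\mathcal Y(x,u)\}$ has a finite optimal value. Two formulations are called equivalent if they have the same optimal value and any optimal first-stage solution of one is optimal for the other, and vice versa. *)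

theory Defs
  imports "HOL-Analysis.Analysis"
begin

text \<open>Vectors are type-indexed: x :: real^'x (first stage, integer coordinates indexed by I),
  u :: real^'u, y :: real^'y; the order on vectors is componentwise.
  Row vectors c1, c2 are represented as vectors, c1 x written c1 \<bullet> x.\<close>

definition first_stage_set ::
  "'x::finite set \<Rightarrow> real^'x^'a::finite \<Rightarrow> real^'a \<Rightarrow> (real^'x) set" where
  "first_stage_set I A b =
     {x. (\<forall>i\<in>I. x $ i \<in> \<int>) \<and> 0 \<le> x \<and> b \<le> A *v x}"

definition unc_set ::
  "(real^'x::finite \<Rightarrow> real^'u::finite^'r::finite) \<Rightarrow> real^'r \<Rightarrow> real^'x^'r
     \<Rightarrow> real^'x \<Rightarrow> (real^'u) set" where
  "unc_set F h G x = {u. 0 \<le> u \<and> F x *v u \<le> h + G *v x}"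

definition rec_set ::
  "real^'y::finite^'m::finite \<Rightarrow> real^'m \<Rightarrow> real^'x::finite^'m \<Rightarrow> real^'u::finite^'m
     \<Rightarrow> real^'x \<Rightarrow> real^'u \<Rightarrow> (real^'y) set" where
  "rec_set B2 d B1 E x u = {y. 0 \<le> y \<and> d - B1 *v x - E *v u \<le> B2 *v y}"

definition dual_poly :: "real^'y::finite^'m::finite \<Rightarrow> real^'y \<Rightarrow> (real^'m) set" where
  "dual_poly B2 c2 = {\<pi>. 0 \<le> \<pi> \<and> transpose B2 *v \<pi> \<le> c2}"

definition dual_rec_cone :: "real^'y::finite^'m::finite \<Rightarrow> (real^'m) set" where
  "dual_rec_cone B2 = {\<gamma>. 0 \<le> \<gamma> \<and> transpose B2 *v \<gamma> \<le> 0}"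

text \<open>All (positive multiples of) extreme ray directions are included; the ray constraints
  are positively homogeneous in \<gamma>, so this is the same as using one representative per ray.\<close>

definition extreme_points_Pi :: "real^'y::finite^'m::finite \<Rightarrow> real^'y \<Rightarrow> (real^'m) set" where
  "extreme_points_Pi B2 c2 = {\<pi>. \<pi> extreme_point_of (dual_poly B2 c2)}"

definition extreme_rays_Pi :: "real^'y::finite^'m::finite \<Rightarrow> (real^'m) set" where
  "extreme_rays_Pi B2 =
     {\<gamma>. \<gamma> \<noteq> 0 \<and> ((\<lambda>t. t *\<^sub>R \<gamma>) ` {0..}) face_of (dual_rec_cone B2)}"

text \<open>Objective of the original problem for a fixed first stage x (extended reals:
  inf over empty set = +\<infinity>, sup over empty set = -\<infinity>).\<close>

definition orig_obj where
  "orig_obj c1 c2 F h G B1 B2 d E x =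
     ereal (c1 \<bullet> x) +
       (SUP u\<in>unc_set F h G x. INF y\<in>rec_set B2 d B1 E x u. ereal (c2 \<bullet> y))"

definition orig_val where
  "orig_val I A b c1 c2 F h G B1 B2 d E =
     (INF x\<in>first_stage_set I A b. orig_obj c1 c2 F h G B1 B2 d E x)"

definition orig_opt where
  "orig_opt I A b c1 c2 F h G B1 B2 d E x \<longleftrightarrow>
     x \<in> first_stage_set I A b \<and>
     orig_obj c1 c2 F h G B1 B2 d E x < \<infinity> \<and>
     orig_obj c1 c2 F h G B1 B2 d E x = orig_val I A b c1 c2 F h G B1 B2 d E"

definition ref_feas where
  "ref_feas I A b c2 F h G B1 B2 d E x \<eta> \<longleftrightarrow>
     x \<in> first_stage_set I A b \<and>
     (\<forall>\<pi>\<in>extreme_points_Pi B2 c2.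
        ereal ((d - B1 *v x) \<bullet> \<pi>) + (SUP u\<in>unc_set F h G x. ereal ((- (E *v u)) \<bullet> \<pi>))
          \<le> ereal \<eta>) \<and>
     (\<forall>\<gamma>\<in>extreme_rays_Pi B2.
        ereal ((d - B1 *v x) \<bullet> \<gamma>) + (SUP v\<in>unc_set F h G x. ereal ((- (E *v v)) \<bullet> \<gamma>))
          \<le> 0)"

definition ref_val where
  "ref_val I A b c1 c2 F h G B1 B2 d E =
     (INF p\<in>{(x, \<eta>). ref_feas I A b c2 F h G B1 B2 d E x \<eta>}. ereal (c1 \<bullet> fst p + snd p))"

definition ref_opt where
  "ref_opt I A b c1 c2 F h G B1 B2 d E x \<longleftrightarrow>
     (\<exists>\<eta>. ref_feas I A b c2 F h G B1 B2 d E x \<eta> \<and>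
          ereal (c1 \<bullet> x + \<eta>) = ref_val I A b c1 c2 F h G B1 B2 d E)"

definition det_val where
  "det_val I A b c1 c2 F h G B1 B2 d E =
     (INF p\<in>{(x, u, y). x \<in> first_stage_set I A b \<and> u \<in> unc_set F h G x \<and>
                         y \<in> rec_set B2 d B1 E x u}.
        ereal (c1 \<bullet> fst p + c2 \<bullet> snd (snd p)))"

end

theory Submission
  imports Defs
begin




lemma inner_mv:
  fixes B :: "real^'n::finite^'m::finite"
  shows "(B *v y) \<bullet> p = y \<bullet> (transpose B *v p)"
proof -
  have "(B *v y) \<bullet> p = p \<bullet> (B *v y)" by (rule inner_commute)
  also have "\<dots> = (p v* B) \<bullet> y" by (rule dot_lmul_matrix[symmetric])
  also have "\<dots> = y \<bullet> (p v* B)" by (rule inner_commute)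
  finally show ?thesis by simp
qed

lemma inner_mono_nn:
  fixes x y z :: "real^'n::finite"
  assumes "x \<le> y" "0 \<le> z"
  shows "x \<bullet> z \<le> y \<bullet> z"
  using assms unfolding inner_vec_def less_eq_vec_def
  by (auto intro!: sum_mono mult_right_mono)

lemma weak_dual:
  fixes B :: "real^'n::finite^'m::finite"
  assumes "0 \<le> p" "transpose B *v p \<le> c" "0 \<le> y" "w \<le> B *v y"
  shows "w \<bullet> p \<le> c \<bullet> y"
proof -
  have "w \<bullet> p \<le> (B *v y) \<bullet> p" by (rule inner_mono_nn[OF assms(4,1)])
  also have "\<dots> = y \<bullet> (transpose B *v p)" by (rule inner_mv)
  also have "\<dots> = (transpose B *v p) \<bullet> y" by (rule inner_commute)
  also have "\<dots> \<le> c \<bullet> y" by (rule inner_mono_nn[OF assms(2,3)])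
  finally show ?thesis .
qed



lemma vec_le_add: fixes a b c d :: "real^'n::finite"
  shows "a \<le> b \<Longrightarrow> c \<le> d \<Longrightarrow> a + c \<le> b + d"
  by (simp add: less_eq_vec_def add_mono)

lemma vec_le_scale: fixes a b :: "real^'n::finite"
  shows "a \<le> b \<Longrightarrow> 0 \<le> t \<Longrightarrow> t *\<^sub>R a \<le> t *\<^sub>R b"
  by (simp add: less_eq_vec_def mult_left_mono)

lemma transpose_row: "transpose (B::real^'n::finite^'m::finite) $ j = column j B"
  by (simp add: vec_eq_iff transpose_def column_def)

lemma farkas_lp:
  fixes B :: "real^'n::finite^'m::finite" and c :: "real^'n" and w :: "real^'m" and \<eta> :: real
  assumes P: "\<And>\<pi>. 0 \<le> \<pi> \<Longrightarrow> transpose B *v \<pi> \<le> c \<Longrightarrow> w \<bullet> \<pi> \<le> \<eta>"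
    and C: "\<And>\<gamma>. 0 \<le> \<gamma> \<Longrightarrow> transpose B *v \<gamma> \<le> 0 \<Longrightarrow> w \<bullet> \<gamma> \<le> 0"
  shows "\<exists>y. 0 \<le> y \<and> w \<le> B *v y \<and> c \<bullet> y \<le> \<eta>"
proof (rule ccontr)
  assume nex: "\<not> ?thesis"
  define Q :: "((real^'m) \<times> real) set" where "Q = {(z, r). \<exists>y. 0 \<le> y \<and> z \<le> B *v y \<and> c \<bullet> y \<le> r}"
  define S where "S = (\<lambda>j. (column j B, c$j)) ` UNIV \<union> (\<lambda>i. (- axis i 1, 0::real)) ` UNIV \<union> {(0, 1)}"
  have finS: "finite S" unfolding S_def by simp
  have SQ: "S \<subseteq> Q"
  proof -
    have "(column j B, c$j) \<in> Q" for j
    proof -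
      have "0 \<le> axis j (1::real)" by (simp add: less_eq_vec_def axis_def)
      then show ?thesis unfolding Q_def
        by (auto intro!: exI[of _ "axis j 1"] simp: matrix_vector_mult_basis inner_axis)
    qed
    moreover have "(- axis i 1, 0) \<in> Q" for i
      unfolding Q_def
      by (auto intro!: exI[of _ "0"] simp: less_eq_vec_def axis_def)
    moreover have "(0, 1) \<in> Q"
      unfolding Q_def by (auto intro!: exI[of _ "0"])
    ultimately show ?thesis unfolding S_def by auto
  qed
  have cQ: "convex_cone Q"
    unfolding convex_cone_iff
  proof (intro conjI ballI allI impI)
    show "0 \<in> Q" unfolding Q_def zero_prod_def by (auto intro!: exI[of _ "0"])
  next
    fix p q assume "p \<in> Q" "q \<in> Q"
    then obtain z1 r1 z2 r2 y1 y2 where "p = (z1, r1)" "q = (z2, r2)"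
      "0 \<le> y1" "z1 \<le> B *v y1" "c \<bullet> y1 \<le> r1" "0 \<le> y2" "z2 \<le> B *v y2" "c \<bullet> y2 \<le> r2"
      unfolding Q_def by auto
    then show "p + q \<in> Q" unfolding Q_def
      by (auto intro!: exI[of _ "y1 + y2"] vec_le_add simp: matrix_vector_right_distrib inner_add_right)
  next
    fix p and t :: real assume "p \<in> Q" "0 \<le> t"
    then obtain z1 r1 y1 where "p = (z1, r1)" "0 \<le> y1" "z1 \<le> B *v y1" "c \<bullet> y1 \<le> r1"
      unfolding Q_def by auto
    then show "t *\<^sub>R p \<in> Q" unfolding Q_def using \<open>0 \<le> t\<close>
      by (auto intro!: exI[of _ "t *\<^sub>R y1"] vec_le_scale[of 0 _ t, simplified] vec_le_scale
          simp: matrix_vector_mult_scaleR mult_left_mono)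
  qed
  define H where "H = convex_cone hull S"
  have HQ: "H \<subseteq> Q" unfolding H_def using hull_minimal[of S Q convex_cone] SQ cQ by blast
  have wH: "(w, \<eta>) \<notin> H" using HQ nex unfolding Q_def by auto
  obtain a b where ab: "a \<bullet> (w, \<eta>) < b" "\<And>x. x \<in> H \<Longrightarrow> b < a \<bullet> x"
    using separating_hyperplane_closed_point[OF _ _ wH] unfolding H_def
    using convex_convex_cone_hull closed_convex_cone_hull[OF finS] by blast
  have cH: "convex_cone H" unfolding H_def by (rule convex_cone_convex_cone_hull)
  have "0 \<in> H" using cH by (simp add: convex_cone_iff)
  then have b0: "b < 0" using ab(2)[of 0] by simp
  have anon: "0 \<le> a \<bullet> x" if "x \<in> H" for x
  proof (rule ccontr)
    assume "\<not> 0 \<le> a \<bullet> x"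
    then have neg: "a \<bullet> x < 0" by simp
    define t where "t = b / (a \<bullet> x)"
    have "0 \<le> t" unfolding t_def using neg b0 by (simp add: divide_nonpos_neg)
    then have "t *\<^sub>R x \<in> H" using cH that by (simp add: convex_cone_iff)
    then have "b < a \<bullet> (t *\<^sub>R x)" by (rule ab(2))
    moreover have "a \<bullet> (t *\<^sub>R x) = b" unfolding t_def using neg by simp
    ultimately show False by simp
  qed
  have aS: "0 \<le> a \<bullet> s" if "s \<in> S" for s
    using anon that hull_subset[of S convex_cone] unfolding H_def by blast
  obtain p l where a_def: "a = (p, l)" by (cases a)
  define \<rho> where "\<rho> = - p"
  have l0: "0 \<le> l" using aS[of "(0,1)"] unfolding S_def a_def by simp
  have \<rho>0: "0 \<le> \<rho>"
  proof -
    have "0 \<le> - p $ i" for i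
      using aS[of "(- axis i 1, 0)"] unfolding S_def a_def by (simp add: inner_axis)
    then show ?thesis unfolding \<rho>_def less_eq_vec_def by simp
  qed
  have Bt: "transpose B *v \<rho> \<le> l *\<^sub>R c"
  proof -
    have "column j B \<bullet> \<rho> \<le> l * c $ j" for j
      using aS[of "(column j B, c$j)"] unfolding S_def a_def \<rho>_def
      by (simp add: inner_commute)
    moreover have "(transpose B *v \<rho>) $ j = column j B \<bullet> \<rho>" for j
      by (simp only: matrix_vector_mul_component transpose_row)
    ultimately show ?thesis unfolding less_eq_vec_def by simp
  qed
  have gt: "l * \<eta> < w \<bullet> \<rho>" using ab(1) b0 unfolding a_def \<rho>_def by (simp add: inner_commute)
  show False
  proof (cases "l = 0")
    case True
    then have "w \<bullet> \<rho> \<le> 0" using C[OF \<rho>0] Bt by simp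
    then show False using gt True by simp
  next
    case False
    then have lp: "0 < l" using l0 by simp
    have "0 \<le> (1/l) *\<^sub>R \<rho>" using \<rho>0 lp vec_le_scale[of 0 \<rho> "1/l"] by simp
    moreover have "transpose B *v ((1/l) *\<^sub>R \<rho>) \<le> c"
      using vec_le_scale[OF Bt, of "1/l"] lp by (simp add: matrix_vector_mult_scaleR)
    ultimately have "w \<bullet> ((1/l) *\<^sub>R \<rho>) \<le> \<eta>" by (rule P)
    then have "w \<bullet> \<rho> \<le> l * \<eta>" using lp by (simp add: field_simps)
    then show False using gt by simp
  qed
qed


definition sm :: "real^'m::finite \<Rightarrow> real" where "sm v = sum (\<lambda>i. v$i) UNIV"

lemma sm_add: "sm (a + b) = sm a + sm b" by (simp add: sm_def sum.distrib)
lemma sm_scale: "sm (t *\<^sub>R a) = t * sm a" by (simp add: sm_def sum_distrib_left)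
lemma sm_nonneg: "0 \<le> a \<Longrightarrow> 0 \<le> sm a" by (simp add: sm_def less_eq_vec_def sum_nonneg)
lemma sm_pos: "0 \<le> a \<Longrightarrow> a \<noteq> 0 \<Longrightarrow> 0 < sm a"
proof -
  assume a: "0 \<le> a" "a \<noteq> 0"
  then obtain i where "a $ i \<noteq> 0" by (auto simp: vec_eq_iff)
  moreover have "0 \<le> a $ i" using a(1) by (simp add: less_eq_vec_def)
  ultimately have "0 < a $ i" by linarith
  moreover have "a $ i \<le> sm a" unfolding sm_def
    using a(1) by (intro member_le_sum) (auto simp: less_eq_vec_def)
  ultimately show ?thesis by simp
qed

definition Khat :: "real^'n::finite^'m::finite \<Rightarrow> real^'n \<Rightarrow> ((real^'m) \<times> real) set" where
  "Khat B c = {(\<rho>, l). 0 \<le> \<rho> \<and> 0 \<le> l \<and> transpose B *v \<rho> \<le> l *\<^sub>R c \<and> sm \<rho> + l = 1}"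

lemma tB_comp: "(transpose B *v x) $ j = (transpose B $ j) \<bullet> x"
  by (simp only: matrix_vector_mul_component)

lemma Khat_closed: fixes B :: "real^'n::finite^'m::finite" shows "closed (Khat B c)"
proof -
  have eq: "Khat B c = {p. \<forall>i. 0 \<le> fst p $ i} \<inter> {p. 0 \<le> snd p} \<inter>
     {p. \<forall>j. (transpose B $ j) \<bullet> fst p \<le> snd p * c $ j} \<inter> {p. (\<Sum>i\<in>UNIV. fst p $ i) + snd p = 1}"
    unfolding Khat_def sm_def less_eq_vec_def tB_comp
    by auto
  show ?thesis unfolding eq
    by (intro closed_Int closed_Collect_all closed_Collect_le closed_Collect_eq continuous_intros)
qed

lemma Khat_bounded: fixes B :: "real^'n::finite^'m::finite" shows "bounded (Khat B c)"
proof -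
  have "norm p \<le> 1" if "p \<in> Khat B c" for p
  proof -
    obtain \<rho> l where p0: "p = (\<rho>, l)" by (cases p)
    then have p: "p = (\<rho>, l)" "0 \<le> \<rho>" "0 \<le> l" "sm \<rho> + l = 1"
      using that unfolding Khat_def by auto
    have "norm p \<le> norm \<rho> + norm l" unfolding p(1) by (rule norm_Pair_le)
    also have "norm \<rho> \<le> sm \<rho>" unfolding sm_def using norm_le_l1_cart[of \<rho>] p(2)
      by (simp add: less_eq_vec_def)
    finally show ?thesis using p by simp
  qed
  then show ?thesis unfolding bounded_iff by blast
qed

lemma Khat_convex: fixes B :: "real^'n::finite^'m::finite" shows "convex (Khat B c)"
  unfolding convex_def
proof (intro ballI allI impI)
  fix x y :: "(real^'m) \<times> real" and u v :: real
  assume "x \<in> Khat B c" "y \<in> Khat B c" "0 \<le> u" "0 \<le> v" "u + v = 1"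
  then obtain r1 l1 r2 l2 where xy: "x = (r1, l1)" "y = (r2, l2)" "0 \<le> r1" "0 \<le> l1"
    "transpose B *v r1 \<le> l1 *\<^sub>R c" "sm r1 + l1 = 1" "0 \<le> r2" "0 \<le> l2"
    "transpose B *v r2 \<le> l2 *\<^sub>R c" "sm r2 + l2 = 1" and uv: "0 \<le> u" "0 \<le> v" "u + v = 1"
    unfolding Khat_def by auto
  have "0 \<le> u *\<^sub>R r1 + v *\<^sub>R r2"
    using xy uv by (simp add: less_eq_vec_def)
  moreover have "transpose B *v (u *\<^sub>R r1 + v *\<^sub>R r2) \<le> (u * l1 + v * l2) *\<^sub>R c"
  proof -
    have "transpose B *v (u *\<^sub>R r1 + v *\<^sub>R r2) = u *\<^sub>R (transpose B *v r1) + v *\<^sub>R (transpose B *v r2)"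
      by (simp only: matrix_vector_right_distrib matrix_vector_mult_scaleR)
    also have "\<dots> \<le> u *\<^sub>R (l1 *\<^sub>R c) + v *\<^sub>R (l2 *\<^sub>R c)"
      by (rule vec_le_add[OF vec_le_scale[OF xy(5) uv(1)] vec_le_scale[OF xy(9) uv(2)]])
    also have "\<dots> = (u * l1 + v * l2) *\<^sub>R c" by (simp add: algebra_simps)
    finally show ?thesis .
  qed
  moreover have "sm (u *\<^sub>R r1 + v *\<^sub>R r2) + (u * l1 + v * l2) = 1"
  proof -
    have "sm (u *\<^sub>R r1 + v *\<^sub>R r2) + (u * l1 + v * l2) = u * (sm r1 + l1) + v * (sm r2 + l2)"
      by (simp add: sm_add sm_scale algebra_simps)
    also have "\<dots> = 1" using xy(6,10) uv(3) by simp
    finally show ?thesis .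
  qed
  ultimately show "u *\<^sub>R x + v *\<^sub>R y \<in> Khat B c"
    unfolding Khat_def xy using xy uv by simp
qed


lemma ext_comb:
  fixes e p q :: "'a::real_vector"
  assumes "e extreme_point_of K" "p \<in> K" "q \<in> K" "0 < \<alpha>" "0 < \<beta>" "\<alpha> + \<beta> = 1"
    "e = \<alpha> *\<^sub>R p + \<beta> *\<^sub>R q"
  shows "p = e \<and> q = e"
proof (cases "p = q")
  case True
  then have "e = (\<alpha> + \<beta>) *\<^sub>R p" using assms(7) by (simp add: scaleR_left_distrib)
  then show ?thesis using True assms(6) by simp
next
  case False
  have "\<alpha> = 1 - \<beta>" using assms(6) by simp
  then have "e \<in> open_segment p q" unfolding in_segment
    using False assms(4,5,7) by (intro conjI exI[of _ \<beta>]) auto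
  then show ?thesis using assms(1-3) unfolding extreme_point_of_def by blast
qed

lemma phi_in_K:
  fixes B :: "real^'n::finite^'m::finite"
  assumes "a \<in> dual_poly B c"
  shows "(1 / (sm a + 1)) *\<^sub>R (a, 1::real) \<in> Khat B c"
proof -
  have a0: "0 \<le> a" and aB: "transpose B *v a \<le> c" using assms by (auto simp: dual_poly_def)
  define s where "s = sm a + 1"
  have sp: "0 < s" unfolding s_def using sm_nonneg[OF a0] by simp
  have "0 \<le> (1/s) *\<^sub>R a" using vec_le_scale[OF a0, of "1/s"] sp by simp
  moreover have "transpose B *v ((1/s) *\<^sub>R a) \<le> (1/s) *\<^sub>R c"
    using vec_le_scale[OF aB, of "1/s"] sp by (simp add: matrix_vector_mult_scaleR)
  moreover have "sm ((1/s) *\<^sub>R a) + 1/s = 1"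
    using sp unfolding sm_scale by (simp add: s_def field_simps)
  ultimately show ?thesis using sp unfolding Khat_def s_def[symmetric] by simp
qed

lemma psi_in_K:
  fixes B :: "real^'n::finite^'m::finite"
  assumes "a \<in> dual_rec_cone B" "a \<noteq> 0"
  shows "(1 / sm a) *\<^sub>R (a, 0::real) \<in> Khat B c"
proof -
  have a0: "0 \<le> a" and aB: "transpose B *v a \<le> 0" using assms by (auto simp: dual_rec_cone_def)
  define s where "s = sm a"
  have sp: "0 < s" unfolding s_def using sm_pos[OF a0 assms(2)] by simp
  have "0 \<le> (1/s) *\<^sub>R a" using vec_le_scale[OF a0, of "1/s"] sp by simp
  moreover have "transpose B *v ((1/s) *\<^sub>R a) \<le> 0"
    using vec_le_scale[OF aB, of "1/s"] sp by (simp add: matrix_vector_mult_scaleR)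
  moreover have "sm ((1/s) *\<^sub>R a) = 1"
    using sp unfolding sm_scale by (simp add: s_def field_simps)
  ultimately show ?thesis using sp unfolding Khat_def s_def[symmetric] by simp
qed

lemma ext_pt:
  fixes B :: "real^'n::finite^'m::finite"
  assumes e: "(\<rho>, l) extreme_point_of (Khat B c)" and lp: "0 < l"
  shows "((1/l) *\<^sub>R \<rho>) extreme_point_of (dual_poly B c)"
proof -
  from e have mem: "(\<rho>, l) \<in> Khat B c" by (simp add: extreme_point_of_def)
  then have r0: "0 \<le> \<rho>" and rB: "transpose B *v \<rho> \<le> l *\<^sub>R c" and rs: "sm \<rho> + l = 1"
    by (auto simp: Khat_def)
  define \<pi>0 where "\<pi>0 = (1/l) *\<^sub>R \<rho>"
  have "0 \<le> \<pi>0" unfolding \<pi>0_def using vec_le_scale[OF r0, of "1/l"] lp by simp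
  moreover have "transpose B *v \<pi>0 \<le> c"
    unfolding \<pi>0_def using vec_le_scale[OF rB, of "1/l"] lp by (simp add: matrix_vector_mult_scaleR)
  ultimately have pin: "\<pi>0 \<in> dual_poly B c" by (simp add: dual_poly_def)
  have rho_eq: "\<rho> = l *\<^sub>R \<pi>0" unfolding \<pi>0_def using lp by simp
  show ?thesis unfolding \<pi>0_def[symmetric] extreme_point_of_def
  proof (intro conjI ballI notI pin)
    fix a b assume a: "a \<in> dual_poly B c" and b: "b \<in> dual_poly B c" and seg: "\<pi>0 \<in> open_segment a b"
    then obtain u where ab: "a \<noteq> b" and u: "0 < u" "u < 1" and pu: "\<pi>0 = (1 - u) *\<^sub>R a + u *\<^sub>R b"
      unfolding in_segment by auto
    define sa where "sa = sm a + 1"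
    define sb where "sb = sm b + 1"
    have sap: "0 < sa" unfolding sa_def using sm_nonneg[of a] a by (simp add: dual_poly_def)
    have sbp: "0 < sb" unfolding sb_def using sm_nonneg[of b] b by (simp add: dual_poly_def)
    define \<alpha> where "\<alpha> = l * (1 - u) * sa"
    define \<beta> where "\<beta> = l * u * sb"
    have ap: "0 < \<alpha>" unfolding \<alpha>_def using lp u sap by simp
    have bp: "0 < \<beta>" unfolding \<beta>_def using lp u sbp by simp
    have smpi: "sm \<pi>0 = (1 - u) * sm a + u * sm b" unfolding pu by (simp add: sm_add sm_scale)
    have smrho: "sm \<rho> = l * sm \<pi>0" unfolding rho_eq by (simp add: sm_scale)
    have "\<alpha> + \<beta> = l * ((1 - u) * sm a + u * sm b) + l"
      unfolding \<alpha>_def \<beta>_def sa_def sb_def by (simp add: algebra_simps)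
    also have "\<dots> = 1" using rs smrho smpi by simp
    finally have sum1: "\<alpha> + \<beta> = 1" .
    have fa: "(1 / sa) *\<^sub>R (a, 1::real) \<in> Khat B c" unfolding sa_def by (rule phi_in_K[OF a])
    have fb: "(1 / sb) *\<^sub>R (b, 1::real) \<in> Khat B c" unfolding sb_def by (rule phi_in_K[OF b])
    have comb: "(\<rho>, l) = \<alpha> *\<^sub>R ((1 / sa) *\<^sub>R (a, 1::real)) + \<beta> *\<^sub>R ((1 / sb) *\<^sub>R (b, 1::real))"
    proof -
      have "\<alpha> *\<^sub>R ((1 / sa) *\<^sub>R (a, 1::real)) = (l * (1 - u)) *\<^sub>R (a, 1)"
        unfolding \<alpha>_def using sap by simp
      moreover have "\<beta> *\<^sub>R ((1 / sb) *\<^sub>R (b, 1::real)) = (l * u) *\<^sub>R (b, 1)"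
        unfolding \<beta>_def using sbp by simp
      moreover have "(\<rho>, l) = (l * (1 - u)) *\<^sub>R (a, 1::real) + (l * u) *\<^sub>R (b, 1)"
        unfolding rho_eq pu by (simp add: algebra_simps)
      ultimately show ?thesis by simp
    qed
    from ext_comb[OF e fa fb ap bp sum1 comb]
    have ea: "(1 / sa) *\<^sub>R (a, 1::real) = (\<rho>, l)" and eb: "(1 / sb) *\<^sub>R (b, 1::real) = (\<rho>, l)"
      by auto
    have "a = sa *\<^sub>R \<rho>" using ea sap by auto
    moreover have "sa = 1 / l"
    proof -
      have "l * sa = 1" using ea sap by (auto simp: field_simps)
      moreover have "l \<noteq> 0" using lp by simp
      ultimately show ?thesis by (simp add: field_simps)
    qed
    moreover have "b = sb *\<^sub>R \<rho>" using eb sbp by auto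
    moreover have "sb = 1 / l"
    proof -
      have "l * sb = 1" using eb sbp by (auto simp: field_simps)
      moreover have "l \<noteq> 0" using lp by simp
      ultimately show ?thesis by (simp add: field_simps)
    qed
    ultimately have "a = b" by simp
    then show False using ab by simp
  qed
qed


lemma ext_ray:
  fixes B :: "real^'n::finite^'m::finite"
  assumes e: "(\<rho>, 0::real) extreme_point_of (Khat B c)"
  shows "\<rho> \<in> extreme_rays_Pi B"
proof -
  from e have mem: "(\<rho>, 0::real) \<in> Khat B c" by (simp add: extreme_point_of_def)
  then have r0: "0 \<le> \<rho>" and rB: "transpose B *v \<rho> \<le> 0" and rs: "sm \<rho> = 1"
    by (auto simp: Khat_def)
  have rn0: "\<rho> \<noteq> 0" using rs by (auto simp: sm_def)
  define T where "T = (\<lambda>t. t *\<^sub>R \<rho>) ` {0::real..}"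
  have memT: "z \<in> T \<longleftrightarrow> (\<exists>t\<ge>0. z = t *\<^sub>R \<rho>)" for z unfolding T_def by auto
  have TC: "T \<subseteq> dual_rec_cone B"
  proof
    fix z assume "z \<in> T"
    then obtain t where t: "0 \<le> t" "z = t *\<^sub>R \<rho>" using memT by auto
    have "0 \<le> t *\<^sub>R \<rho>" using vec_le_scale[OF r0 t(1)] by simp
    moreover have "transpose B *v (t *\<^sub>R \<rho>) \<le> 0"
      using vec_le_scale[OF rB t(1)] by (simp add: matrix_vector_mult_scaleR)
    ultimately show "z \<in> dual_rec_cone B" unfolding t(2) dual_rec_cone_def by simp
  qed
  have cT: "convex T" unfolding T_def
    by (rule convex_linear_image[OF bounded_linear.linear[OF bounded_linear_scaleR_left]]) simp
  have face: "a \<in> T \<and> b \<in> T" if a: "a \<in> dual_rec_cone B" and b: "b \<in> dual_rec_cone B"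
    and x: "x \<in> T" and seg: "x \<in> open_segment a b" for a b x
  proof -
    obtain t where t: "0 \<le> t" "x = t *\<^sub>R \<rho>" using x memT by auto
    obtain u where ab: "a \<noteq> b" and u: "0 < u" "u < 1" and xu: "x = (1 - u) *\<^sub>R a + u *\<^sub>R b"
      using seg unfolding in_segment by auto
    have a0: "0 \<le> a" using a by (simp add: dual_rec_cone_def)
    have b0: "0 \<le> b" using b by (simp add: dual_rec_cone_def)
    show ?thesis
    proof (cases "a = 0")
      case True
      have "u *\<^sub>R b = t *\<^sub>R \<rho>" using xu t True by simp
      then have "(1/u) *\<^sub>R (u *\<^sub>R b) = (1/u) *\<^sub>R (t *\<^sub>R \<rho>)" by simp
      then have "b = (t / u) *\<^sub>R \<rho>" using u by simp
      then have "b \<in> T" unfolding memT using t u by (intro exI[of _ "t/u"]) simp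
      moreover have "a \<in> T" unfolding memT using True by (intro exI[of _ 0]) simp
      ultimately show ?thesis by simp
    next
      case an0: False
      show ?thesis
      proof (cases "b = 0")
        case True
        have "(1 - u) *\<^sub>R a = t *\<^sub>R \<rho>" using xu t True by simp
        then have "(1/(1-u)) *\<^sub>R ((1 - u) *\<^sub>R a) = (1/(1-u)) *\<^sub>R (t *\<^sub>R \<rho>)" by simp
        then have "a = (t / (1 - u)) *\<^sub>R \<rho>" using u by simp
        then have "a \<in> T" unfolding memT using t u by (intro exI[of _ "t/(1-u)"]) simp
        moreover have "b \<in> T" unfolding memT using True by (intro exI[of _ 0]) simp
        ultimately show ?thesis by simp
      next
        case bn0: False
        define sa where "sa = sm a"
        define sb where "sb = sm b"
        have sap: "0 < sa" unfolding sa_def by (rule sm_pos[OF a0 an0])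
        have sbp: "0 < sb" unfolding sb_def by (rule sm_pos[OF b0 bn0])
        have "sm x = t" using rs unfolding t(2) by (simp add: sm_scale)
        moreover have "sm x = (1 - u) * sa + u * sb" unfolding xu sa_def sb_def by (simp add: sm_add sm_scale)
        ultimately have teq: "t = (1 - u) * sa + u * sb" by simp
        have tp: "0 < t" unfolding teq using u sap sbp by (simp add: add_pos_pos)
        define \<alpha> where "\<alpha> = (1 - u) * sa / t"
        define \<beta> where "\<beta> = u * sb / t"
        have ap: "0 < \<alpha>" unfolding \<alpha>_def using u sap tp by simp
        have bp: "0 < \<beta>" unfolding \<beta>_def using u sbp tp by simp
        have sum1: "\<alpha> + \<beta> = 1" unfolding \<alpha>_def \<beta>_def using tp teq by (simp add: field_simps)
        have fa: "(1 / sa) *\<^sub>R (a, 0::real) \<in> Khat B c" unfolding sa_def by (rule psi_in_K[OF a an0])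
        have fb: "(1 / sb) *\<^sub>R (b, 0::real) \<in> Khat B c" unfolding sb_def by (rule psi_in_K[OF b bn0])
        have comb: "(\<rho>, 0::real) = \<alpha> *\<^sub>R ((1 / sa) *\<^sub>R (a, 0::real)) + \<beta> *\<^sub>R ((1 / sb) *\<^sub>R (b, 0::real))"
        proof -
          have e1: "\<alpha> *\<^sub>R ((1 / sa) *\<^sub>R (a, 0::real)) = ((1 - u) / t) *\<^sub>R (a, 0)"
            unfolding \<alpha>_def using sap by simp
          have e2: "\<beta> *\<^sub>R ((1 / sb) *\<^sub>R (b, 0::real)) = (u / t) *\<^sub>R (b, 0)"
            unfolding \<beta>_def using sbp by simp
          have "\<alpha> *\<^sub>R ((1 / sa) *\<^sub>R (a, 0::real)) + \<beta> *\<^sub>R ((1 / sb) *\<^sub>R (b, 0::real))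
              = ((1 - u) / t) *\<^sub>R (a, 0::real) + (u / t) *\<^sub>R (b, 0)" unfolding e1 e2 ..
          also have "\<dots> = ((1 / t) *\<^sub>R x, 0)" unfolding xu
            by (simp add: scaleR_add_right scaleR_scaleR)
          also have "\<dots> = (\<rho>, 0)" using t tp by simp
          finally show ?thesis by simp
        qed
        from ext_comb[OF e fa fb ap bp sum1 comb]
        have ea: "(1 / sa) *\<^sub>R (a, 0::real) = (\<rho>, 0)" and eb: "(1 / sb) *\<^sub>R (b, 0::real) = (\<rho>, 0)"
          by auto
        have "a = sa *\<^sub>R \<rho>" using ea sap by auto
        moreover have "b = sb *\<^sub>R \<rho>" using eb sbp by auto
        ultimately have "a \<in> T" "b \<in> T" unfolding memT using sap sbp
          by (auto intro: exI[of _ sa] exI[of _ sb])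
        then show ?thesis by simp
      qed
    qed
  qed
  have "T face_of dual_rec_cone B" unfolding face_of_def using TC cT face by blast
  then show ?thesis unfolding extreme_rays_Pi_def T_def using rn0 by simp
qed

lemma decomp:
  fixes B :: "real^'n::finite^'m::finite"
  assumes Pt: "\<And>p. p \<in> extreme_points_Pi B c \<Longrightarrow> w \<bullet> p \<le> \<eta>"
    and Rt: "\<And>r. r \<in> extreme_rays_Pi B \<Longrightarrow> w \<bullet> r \<le> 0"
  shows "(\<forall>\<pi>\<in>dual_poly B c. w \<bullet> \<pi> \<le> \<eta>) \<and> (\<forall>\<gamma>\<in>dual_rec_cone B. w \<bullet> \<gamma> \<le> 0)"
proof -
  define L where "L = {z :: (real^'m) \<times> real. (w, -\<eta>) \<bullet> z \<le> 0}"
  have extL: "e \<in> L" if ex: "e extreme_point_of Khat B c" for e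
  proof -
    obtain \<rho> l where e: "e = (\<rho>, l)" by (cases e)
    have l0: "0 \<le> l" using ex unfolding e extreme_point_of_def Khat_def by auto
    show ?thesis
    proof (cases "l = 0")
      case True
      then have "\<rho> \<in> extreme_rays_Pi B" using ex e ext_ray by simp
      then have "w \<bullet> \<rho> \<le> 0" by (rule Rt)
      then show ?thesis unfolding L_def e True by simp
    next
      case False
      then have lp: "0 < l" using l0 by simp
      have "(1/l) *\<^sub>R \<rho> \<in> extreme_points_Pi B c" unfolding extreme_points_Pi_def
        using ext_pt[OF _ lp] ex e by simp
      then have "w \<bullet> ((1/l) *\<^sub>R \<rho>) \<le> \<eta>" by (rule Pt)
      then have "w \<bullet> \<rho> \<le> l * \<eta>" using lp by (simp add: field_simps)
      then show ?thesis unfolding L_def e by (simp add: algebra_simps)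
    qed
  qed
  have KL: "Khat B c \<subseteq> L"
  proof -
    have "Khat B c = convex hull {x. x extreme_point_of Khat B c}"
      by (rule Krein_Milman_Minkowski[OF compact_eq_bounded_closed[THEN iffD2] Khat_convex])
        (simp add: Khat_bounded Khat_closed)
    also have "\<dots> \<subseteq> L"
      by (rule hull_minimal) (use extL in \<open>auto simp: L_def convex_halfspace_le\<close>)
    finally show ?thesis .
  qed
  have P1: "w \<bullet> \<pi> \<le> \<eta>" if p: "\<pi> \<in> dual_poly B c" for \<pi>
  proof -
    have p0: "0 \<le> \<pi>" using p by (simp add: dual_poly_def)
    define s where "s = sm \<pi> + 1"
    have sp: "0 < s" unfolding s_def using sm_nonneg[OF p0] by simp
    have "(1 / s) *\<^sub>R (\<pi>, 1::real) \<in> L" using KL phi_in_K[OF p] unfolding s_def by blast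
    moreover have "(w, -\<eta>) \<bullet> ((1 / s) *\<^sub>R (\<pi>, 1::real)) = (1/s) * (w \<bullet> \<pi> - \<eta>)"
      by (simp add: algebra_simps)
    ultimately have h: "(1/s) * (w \<bullet> \<pi> - \<eta>) \<le> 0" unfolding L_def by simp
    have "w \<bullet> \<pi> - \<eta> = s * ((1/s) * (w \<bullet> \<pi> - \<eta>))" using sp by simp
    also have "\<dots> \<le> 0" using sp by (intro mult_nonneg_nonpos[OF _ h]) simp
    finally show ?thesis by simp
  qed
  have C1: "w \<bullet> \<gamma> \<le> 0" if g: "\<gamma> \<in> dual_rec_cone B" for \<gamma>
  proof (cases "\<gamma> = 0")
    case True then show ?thesis by simp
  next
    case False
    have g0: "0 \<le> \<gamma>" using g by (simp add: dual_rec_cone_def)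
    define s where "s = sm \<gamma>"
    have sp: "0 < s" unfolding s_def using sm_pos[OF g0 False] .
    have "(1 / s) *\<^sub>R (\<gamma>, 0::real) \<in> L" using KL psi_in_K[OF g False] unfolding s_def by blast
    moreover have "(w, -\<eta>) \<bullet> ((1 / s) *\<^sub>R (\<gamma>, 0::real)) = (1/s) * (w \<bullet> \<gamma>)"
      by (simp add: algebra_simps)
    ultimately have h: "(1/s) * (w \<bullet> \<gamma>) \<le> 0" unfolding L_def by simp
    have "w \<bullet> \<gamma> = s * ((1/s) * (w \<bullet> \<gamma>))" using sp by simp
    also have "\<dots> \<le> 0" using sp by (intro mult_nonneg_nonpos[OF _ h]) simp
    finally show ?thesis by simp
  qed
  show ?thesis using P1 C1 by blast
qed


lemma ereal_add_SUP_le: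
  "ereal r + (SUP u\<in>U. ereal (f u)) \<le> ereal \<eta> \<longleftrightarrow> (\<forall>u\<in>U. r + f u \<le> \<eta>)"
proof -
  have *: "ereal r + S \<le> ereal \<eta> \<longleftrightarrow> S \<le> ereal (\<eta> - r)" for S by (cases S) auto
  show ?thesis unfolding * by (auto simp: SUP_le_iff algebra_simps)
qed

lemma core:
  fixes B2 :: "real^'y::finite^'m::finite" and c2 :: "real^'y" and E :: "real^'u::finite^'m"
    and a :: "real^'m" and U :: "(real^'u) set"
  shows "((\<forall>\<pi>\<in>extreme_points_Pi B2 c2.
        ereal (a \<bullet> \<pi>) + (SUP u\<in>U. ereal ((- (E *v u)) \<bullet> \<pi>)) \<le> ereal \<eta>) \<and>
     (\<forall>\<gamma>\<in>extreme_rays_Pi B2.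
        ereal (a \<bullet> \<gamma>) + (SUP v\<in>U. ereal ((- (E *v v)) \<bullet> \<gamma>)) \<le> 0))
    \<longleftrightarrow> (SUP u\<in>U. INF y\<in>{y. 0 \<le> y \<and> a - E *v u \<le> B2 *v y}. ereal (c2 \<bullet> y)) \<le> ereal \<eta>"
  (is "?L \<longleftrightarrow> ?R")
proof
  assume L: ?L
  have LP: "(a - E *v u) \<bullet> p \<le> \<eta>" if "u \<in> U" "p \<in> extreme_points_Pi B2 c2" for u p
    using L that ereal_add_SUP_le[of "a \<bullet> p" "\<lambda>u. (- (E *v u)) \<bullet> p" U \<eta>]
    by (auto simp: inner_diff_left)
  have LR: "(a - E *v u) \<bullet> r \<le> 0" if "u \<in> U" "r \<in> extreme_rays_Pi B2" for u r
    using L that ereal_add_SUP_le[of "a \<bullet> r" "\<lambda>u. (- (E *v u)) \<bullet> r" U 0]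
    by (auto simp: inner_diff_left zero_ereal_def)
  show ?R unfolding SUP_le_iff
  proof
    fix u assume u: "u \<in> U"
    have D: "(\<forall>\<pi>\<in>dual_poly B2 c2. (a - E *v u) \<bullet> \<pi> \<le> \<eta>) \<and> (\<forall>\<gamma>\<in>dual_rec_cone B2. (a - E *v u) \<bullet> \<gamma> \<le> 0)"
      by (rule decomp) (use LP LR u in auto)
    obtain y where y: "0 \<le> y" "a - E *v u \<le> B2 *v y" "c2 \<bullet> y \<le> \<eta>"
      using farkas_lp[of B2 c2 "a - E *v u" \<eta>] D by (auto simp: dual_poly_def dual_rec_cone_def)
    show "(INF y\<in>{y. 0 \<le> y \<and> a - E *v u \<le> B2 *v y}. ereal (c2 \<bullet> y)) \<le> ereal \<eta>"
      by (rule INF_lower2[of y]) (use y in auto)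
  qed
next
  assume R: ?R
  have Ru: "(INF y\<in>{y. 0 \<le> y \<and> a - E *v u \<le> B2 *v y}. ereal (c2 \<bullet> y)) \<le> ereal \<eta>" if "u \<in> U" for u
    using R that unfolding SUP_le_iff by blast
  have P: "(a - E *v u) \<bullet> p \<le> \<eta>" if u: "u \<in> U" and p: "p \<in> extreme_points_Pi B2 c2" for u p
  proof -
    have pP: "0 \<le> p" "transpose B2 *v p \<le> c2"
      using p by (auto simp: extreme_points_Pi_def extreme_point_of_def dual_poly_def)
    have "ereal ((a - E *v u) \<bullet> p) \<le> (INF y\<in>{y. 0 \<le> y \<and> a - E *v u \<le> B2 *v y}. ereal (c2 \<bullet> y))"
      by (rule INF_greatest) (use weak_dual[OF pP] in auto)
    from order_trans[OF this Ru[OF u]] show ?thesis by simp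
  qed
  have Rr: "(a - E *v u) \<bullet> r \<le> 0" if u: "u \<in> U" and r: "r \<in> extreme_rays_Pi B2" for u r
  proof -
    have "r \<in> (\<lambda>t. t *\<^sub>R r) ` {0..}" by (rule image_eqI[of _ _ 1]) auto
    then have "r \<in> dual_rec_cone B2" using r unfolding extreme_rays_Pi_def face_of_def by blast
    then have rC: "0 \<le> r" "transpose B2 *v r \<le> 0" by (auto simp: dual_rec_cone_def)
    have "{y. 0 \<le> y \<and> a - E *v u \<le> B2 *v y} \<noteq> {}"
    proof
      assume e: "{y. 0 \<le> y \<and> a - E *v u \<le> B2 *v y} = {}"
      have "(INF y\<in>{y. 0 \<le> y \<and> a - E *v u \<le> B2 *v y}. ereal (c2 \<bullet> y)) = \<infinity>"
        unfolding e by (simp add: top_ereal_def)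
      then show False using Ru[OF u] by simp
    qed
    then obtain y where "0 \<le> y" "a - E *v u \<le> B2 *v y" by auto
    from weak_dual[OF rC this] show ?thesis by simp
  qed
  show ?L
  proof (intro conjI ballI)
    fix p assume p: "p \<in> extreme_points_Pi B2 c2"
    show "ereal (a \<bullet> p) + (SUP u\<in>U. ereal ((- (E *v u)) \<bullet> p)) \<le> ereal \<eta>"
      unfolding ereal_add_SUP_le using P[OF _ p] by (auto simp: inner_diff_left)
  next
    fix r assume r: "r \<in> extreme_rays_Pi B2"
    show "ereal (a \<bullet> r) + (SUP u\<in>U. ereal ((- (E *v u)) \<bullet> r)) \<le> 0"
      unfolding zero_ereal_def ereal_add_SUP_le using Rr[OF _ r] by (auto simp: inner_diff_left)
  qed
qed


theorem theorem2:
  fixes I :: "'x::finite set"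
    and A :: "real^'x^'a::finite" and b :: "real^'a"
    and c1 :: "real^'x" and c2 :: "real^'y::finite"
    and F :: "real^'x \<Rightarrow> real^'u::finite^'r::finite" and h :: "real^'r" and G :: "real^'x^'r"
    and B1 :: "real^'x^'m::finite" and B2 :: "real^'y^'m" and d :: "real^'m"
    and E :: "real^'u^'m"
  assumes A1: "\<forall>x\<in>first_stage_set I A b. unc_set F h G x \<noteq> {}"
    and A2: "\<forall>x\<in>first_stage_set I A b. bounded (unc_set F h G x)"
    and A3: "\<bar>det_val I A b c1 c2 F h G B1 B2 d E\<bar> \<noteq> \<infinity>"
  shows "ref_val I A b c1 c2 F h G B1 B2 d E = orig_val I A b c1 c2 F h G B1 B2 d E \<and>
         (\<forall>x. orig_opt I A b c1 c2 F h G B1 B2 d E x \<longleftrightarrow> ref_opt I A b c1 c2 F h G B1 B2 d E x)"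
proof -
  define X where "X = first_stage_set I A b"
  define V where "V x = (SUP u\<in>unc_set F h G x. INF y\<in>rec_set B2 d B1 E x u. ereal (c2 \<bullet> y))" for x
  define OV where "OV = orig_val I A b c1 c2 F h G B1 B2 d E"
  define RV where "RV = ref_val I A b c1 c2 F h G B1 B2 d E"
  have recs: "rec_set B2 d B1 E x u = {y. 0 \<le> y \<and> (d - B1 *v x) - E *v u \<le> B2 *v y}" for x u
    by (simp add: rec_set_def)
  have feas: "ref_feas I A b c2 F h G B1 B2 d E x \<eta> \<longleftrightarrow> x \<in> X \<and> V x \<le> ereal \<eta>" for x \<eta>
    unfolding ref_feas_def V_def recs X_def
    using core[of B2 c2 "d - B1 *v x" E "unc_set F h G x" \<eta>] by simp
  have obj: "orig_obj c1 c2 F h G B1 B2 d E x = ereal (c1 \<bullet> x) + V x" for x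
    by (simp add: orig_obj_def V_def)
  obtain D where D: "det_val I A b c1 c2 F h G B1 B2 d E = ereal D"
    using A3 by (cases "det_val I A b c1 c2 F h G B1 B2 d E") auto
  have Vlow: "ereal (D - c1 \<bullet> x) \<le> V x" if x: "x \<in> X" for x
  proof -
    obtain u0 where u0: "u0 \<in> unc_set F h G x" using A1 x unfolding X_def by auto
    have "ereal (D - c1 \<bullet> x) \<le> (INF y\<in>rec_set B2 d B1 E x u0. ereal (c2 \<bullet> y))"
    proof (rule INF_greatest)
      fix y assume y: "y \<in> rec_set B2 d B1 E x u0"
      have "det_val I A b c1 c2 F h G B1 B2 d E \<le> ereal (c1 \<bullet> x + c2 \<bullet> y)"
        unfolding det_val_def by (rule INF_lower2[of "(x, u0, y)"]) (use x u0 y X_def in auto)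
      then show "ereal (D - c1 \<bullet> x) \<le> ereal (c2 \<bullet> y)" using D by simp
    qed
    also have "\<dots> \<le> V x" unfolding V_def by (rule SUP_upper[OF u0])
    finally show ?thesis .
  qed
  have ov: "OV = (INF x\<in>X. ereal (c1 \<bullet> x) + V x)"
    by (simp add: OV_def orig_val_def obj X_def)
  have rv: "RV = (INF p\<in>{(x, \<eta>). x \<in> X \<and> V x \<le> ereal \<eta>}. ereal (c1 \<bullet> fst p + snd p))"
    by (simp add: RV_def ref_val_def feas)
  have eq: "RV = OV"
  proof (rule antisym)
    show "RV \<le> OV" unfolding ov
    proof (rule INF_greatest)
      fix x assume x: "x \<in> X"
      show "RV \<le> ereal (c1 \<bullet> x) + V x"
      proof (cases "V x")
        case (real v)
        have "RV \<le> ereal (c1 \<bullet> fst (x, v) + snd (x, v))" unfolding rv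
          by (rule INF_lower) (use x real in auto)
        then show ?thesis using real by simp
      next
        case PInf then show ?thesis by simp
      next
        case MInf then show ?thesis using Vlow[OF x] by simp
      qed
    qed
  next
    show "OV \<le> RV" unfolding rv
    proof (rule INF_greatest)
      fix p assume "p \<in> {(x, \<eta>). x \<in> X \<and> V x \<le> ereal \<eta>}"
      then obtain x \<eta> where p: "p = (x, \<eta>)" "x \<in> X" "V x \<le> ereal \<eta>" by auto
      have "OV \<le> ereal (c1 \<bullet> x) + V x" unfolding ov by (rule INF_lower) (rule p(2))
      also have "\<dots> \<le> ereal (c1 \<bullet> x) + ereal \<eta>" by (rule add_left_mono) (rule p(3))
      finally show "OV \<le> ereal (c1 \<bullet> fst p + snd p)" using p by simp
    qed
  qed
  have opt: "orig_opt I A b c1 c2 F h G B1 B2 d E x \<longleftrightarrow> ref_opt I A b c1 c2 F h G B1 B2 d E x" for x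
  proof
    assume o: "orig_opt I A b c1 c2 F h G B1 B2 d E x"
    then have x: "x \<in> X" and lt: "ereal (c1 \<bullet> x) + V x < \<infinity>" and e: "ereal (c1 \<bullet> x) + V x = OV"
      by (auto simp: orig_opt_def obj X_def OV_def)
    obtain v where v: "V x = ereal v" using lt Vlow[OF x] by (cases "V x") auto
    show "ref_opt I A b c1 c2 F h G B1 B2 d E x"
      unfolding ref_opt_def feas RV_def[symmetric] using x v e eq by (intro exI[of _ v]) auto
  next
    assume "ref_opt I A b c1 c2 F h G B1 B2 d E x"
    then obtain \<eta> where x: "x \<in> X" and le: "V x \<le> ereal \<eta>" and e: "ereal (c1 \<bullet> x + \<eta>) = RV"
      unfolding ref_opt_def feas RV_def[symmetric] by auto
    have l1: "OV \<le> ereal (c1 \<bullet> x) + V x" unfolding ov by (rule INF_lower) (rule x)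
    have l2: "ereal (c1 \<bullet> x) + V x \<le> ereal (c1 \<bullet> x + \<eta>)" using add_left_mono[OF le, of "ereal (c1 \<bullet> x)"] by simp
    have e2: "ereal (c1 \<bullet> x) + V x = OV" using l1 l2 e eq by simp
    have lt: "ereal (c1 \<bullet> x) + V x < \<infinity>" by (rule le_less_trans[OF l2]) simp
    show "orig_opt I A b c1 c2 F h G B1 B2 d E x"
      unfolding orig_opt_def obj OV_def[symmetric] using x e2 lt X_def by simp
  qed
  show ?thesis using eq opt unfolding RV_def OV_def by blast
qed

end
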